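(* Let $U$ be a VLA-J-SS. Then $U$ satisfies the half Jacobi identity if and only if it satisfies the half commutator formula: for all homogeneous $u,v,w\in U$ and all $m,n\in\mathbb{N}$, $$u_m(v_nw)-\varepsilon_{u,v}v_n(u_mw)=\sum_{i\ge0}\binom{m}{i}(u_iv)_{m+n-i}w .$$
   Context: All spaces over $\mathbb{C}$; $\mathbb{N}=\{0,1,2,\dots\}$; $\varepsilon_{u,v}=(-1)^{|u||v|}$. A VLA-J-SS is a $\mathbb{Z}_2$-graded space $U$ with an even linear operator $D$ and bilinear products $u_nv$ ($n\in\mathbb{N}$) such that for homogeneous $u,v$: $u_nv=0$ for $n$ large; $(Du)_nv=-nu_{n-1}v$ (read as $0$ for $n=0$); $D(u_nv)=(Du)_nv+u_n(Dv)$; $|u_nv|=|u|+|v|$. The half Jacobi identity is: for all homogeneous $u,v,w\in U$ and all $k,m,n\in\mathbb{N}$, $\sum_{i\ge0}(-1)^i\binom{k}{i}(u_{m+k-i}(v_{n+i}w)-\varepsilon_{u,v}(-1)^kv_{n+k-i}(u_{m+i}w))=\sum_{i\ge0}\binom{m}{i}(u_{k+i}v)_{m+n-i}w$. *)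

theory Defs
  imports Complex_Main
begin

text \<open>A complex vector space is modelled by a carrier type 'a (an abelian group) with an
explicit scalar multiplication smul satisfying the vector_space axioms over complex.
The Z2-grading is G :: bool => 'a set, G False = even part, G True = odd part.
Products: prd n u v stands for u_n v.\<close>

definition eps :: "bool \<Rightarrow> bool \<Rightarrow> complex" where
  "eps p q = (if p \<and> q then -1 else 1)"

definition vla_j_ss ::
  "(complex \<Rightarrow> 'a::ab_group_add \<Rightarrow> 'a) \<Rightarrow> (bool \<Rightarrow> 'a set) \<Rightarrow> ('a \<Rightarrow> 'a)
    \<Rightarrow> (nat \<Rightarrow> 'a \<Rightarrow> 'a \<Rightarrow> 'a) \<Rightarrow> bool" where
  "vla_j_ss smul G D prd \<longleftrightarrow>
     vector_space smul \<and>
     (\<forall>p. module.subspace smul (G p)) \<and>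
     G False \<inter> G True = {0} \<and>
     (\<forall>x. \<exists>a b. a \<in> G False \<and> b \<in> G True \<and> x = a + b) \<and>
     Vector_Spaces.linear smul smul D \<and>
     (\<forall>p. D ` G p \<subseteq> G p) \<and>
     (\<forall>n u. Vector_Spaces.linear smul smul (prd n u)) \<and>
     (\<forall>n v. Vector_Spaces.linear smul smul (\<lambda>u. prd n u v)) \<and>
     (\<forall>p q u v. u \<in> G p \<longrightarrow> v \<in> G q \<longrightarrow>
        (\<exists>N. \<forall>n\<ge>N. prd n u v = 0) \<and>
        (\<forall>n. prd n (D u) v = - smul (of_nat n) (prd (n - 1) u v)) \<and>
        (\<forall>n. D (prd n u v) = prd n (D u) v + prd n u (D v)) \<and>
        (\<forall>n. prd n u v \<in> G (p \<noteq> q)))"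

definition half_jacobi ::
  "(complex \<Rightarrow> 'a::ab_group_add \<Rightarrow> 'a) \<Rightarrow> (bool \<Rightarrow> 'a set)
    \<Rightarrow> (nat \<Rightarrow> 'a \<Rightarrow> 'a \<Rightarrow> 'a) \<Rightarrow> bool" where
  "half_jacobi smul G prd \<longleftrightarrow>
     (\<forall>p q r u v w k m n. u \<in> G p \<longrightarrow> v \<in> G q \<longrightarrow> w \<in> G r \<longrightarrow>
        (\<Sum>i\<le>k. smul ((-1) ^ i * of_nat (k choose i))
            (prd (m + k - i) u (prd (n + i) v w)
             - smul (eps p q * (-1) ^ k) (prd (n + k - i) v (prd (m + i) u w))))
        = (\<Sum>i\<le>m. smul (of_nat (m choose i)) (prd (m + n - i) (prd (k + i) u v) w)))"

definition half_commutator ::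
  "(complex \<Rightarrow> 'a::ab_group_add \<Rightarrow> 'a) \<Rightarrow> (bool \<Rightarrow> 'a set)
    \<Rightarrow> (nat \<Rightarrow> 'a \<Rightarrow> 'a \<Rightarrow> 'a) \<Rightarrow> bool" where
  "half_commutator smul G prd \<longleftrightarrow>
     (\<forall>p q r u v w m n. u \<in> G p \<longrightarrow> v \<in> G q \<longrightarrow> w \<in> G r \<longrightarrow>
        prd m u (prd n v w) - smul (eps p q) (prd n v (prd m u w))
        = (\<Sum>i\<le>m. smul (of_nat (m choose i)) (prd (m + n - i) (prd i u v) w)))"

end

theory Submission
  imports Defs
begin

context module
begin

lemma S_step:
  "(\<Sum>i\<le>Suc k. ((-1)^i * of_nat (Suc k choose i)) *s g (a + Suc k - i) (b + i)) =
   (\<Sum>i\<le>k. ((-1)^i * of_nat (k choose i)) *s g (Suc a + k - i) (b + i)) -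
   (\<Sum>i\<le>k. ((-1)^i * of_nat (k choose i)) *s g (a + k - i) (Suc b + i))"
proof -
  define A where "A = (\<Sum>i\<le>Suc k. ((-1)^i * of_nat (k choose i)) *s g (a + Suc k - i) (b + i))"
  have A1: "A = (\<Sum>i\<le>k. ((-1)^i * of_nat (k choose i)) *s g (Suc a + k - i) (b + i))"
    unfolding A_def by (simp add: sum.atMost_Suc binomial_eq_0)
  have A2: "A = g (a + Suc k) b + (\<Sum>i\<le>k. ((-1)^(Suc i) * of_nat (k choose Suc i)) *s g (a + k - i) (b + Suc i))"
    unfolding A_def by (subst sum.atMost_Suc_shift) simp
  have "(\<Sum>i\<le>Suc k. ((-1)^i * of_nat (Suc k choose i)) *s g (a + Suc k - i) (b + i))
     = g (a + Suc k) b + (\<Sum>i\<le>k. ((-1)^(Suc i) * of_nat (Suc k choose Suc i)) *s g (a + k - i) (b + Suc i))"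
    by (subst sum.atMost_Suc_shift) simp
  also have "(\<Sum>i\<le>k. ((-1)^(Suc i) * of_nat (Suc k choose Suc i)) *s g (a + k - i) (b + Suc i))
     = (\<Sum>i\<le>k. ((-1)^(Suc i) * of_nat (k choose Suc i)) *s g (a + k - i) (b + Suc i))
      - (\<Sum>i\<le>k. ((-1)^i * of_nat (k choose i)) *s g (a + k - i) (Suc b + i))"
    by (subst sum_subtractf[symmetric], rule sum.cong, simp, simp add: scale_left_distrib[symmetric] scale_left_diff_distrib[symmetric] algebra_simps)
  finally show ?thesis using A1 A2 by (simp add: algebra_simps)
qed

lemma T_step:
  "(\<Sum>i\<le>m. of_nat (m choose i) *s h (Suc k + i) (m + n - i)) =
   (\<Sum>i\<le>Suc m. of_nat (Suc m choose i) *s h (k + i) (Suc m + n - i)) -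
   (\<Sum>i\<le>m. of_nat (m choose i) *s h (k + i) (m + Suc n - i))"
proof -
  define B where "B = (\<Sum>i\<le>Suc m. of_nat (m choose i) *s h (k + i) (Suc m + n - i))"
  have B1: "B = (\<Sum>i\<le>m. of_nat (m choose i) *s h (k + i) (m + Suc n - i))"
    unfolding B_def by (simp add: sum.atMost_Suc binomial_eq_0)
  have B2: "B = h k (Suc m + n) + (\<Sum>i\<le>m. of_nat (m choose Suc i) *s h (Suc k + i) (m + n - i))"
    unfolding B_def by (subst sum.atMost_Suc_shift) simp
  have "(\<Sum>i\<le>Suc m. of_nat (Suc m choose i) *s h (k + i) (Suc m + n - i))
     = h k (Suc m + n) + (\<Sum>i\<le>m. of_nat (Suc m choose Suc i) *s h (Suc k + i) (m + n - i))"
    by (subst sum.atMost_Suc_shift) simp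
  also have "(\<Sum>i\<le>m. of_nat (Suc m choose Suc i) *s h (Suc k + i) (m + n - i))
     = (\<Sum>i\<le>m. of_nat (m choose Suc i) *s h (Suc k + i) (m + n - i))
      + (\<Sum>i\<le>m. of_nat (m choose i) *s h (Suc k + i) (m + n - i))"
    by (simp add: sum.distrib[symmetric] algebra_simps)
  finally show ?thesis using B1 B2 by (simp add: algebra_simps)
qed

end


theorem lemma6p1:
  fixes smul :: "complex \<Rightarrow> 'a::ab_group_add \<Rightarrow> 'a"
    and G :: "bool \<Rightarrow> 'a set" and D :: "'a \<Rightarrow> 'a" and prd :: "nat \<Rightarrow> 'a \<Rightarrow> 'a \<Rightarrow> 'a"
  assumes "vla_j_ss smul G D prd"
  shows "half_jacobi smul G prd \<longleftrightarrow> half_commutator smul G prd"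
proof -
  interpret V: vector_space smul using assms unfolding vla_j_ss_def by blast
  show ?thesis
  proof
    assume H: "half_jacobi smul G prd"
    show "half_commutator smul G prd"
      unfolding half_commutator_def
    proof (intro allI impI)
      fix p q r u v w m n
      assume "u \<in> G p" "v \<in> G q" "w \<in> G r"
      from H[unfolded half_jacobi_def, rule_format, OF this, of 0 m n]
      show "prd m u (prd n v w) - smul (eps p q) (prd n v (prd m u w))
        = (\<Sum>i\<le>m. smul (of_nat (m choose i)) (prd (m + n - i) (prd i u v) w))"
        by simp
    qed
  next
    assume H: "half_commutator smul G prd"
    show "half_jacobi smul G prd"
      unfolding half_jacobi_def
    proof (intro allI impI)
      fix p q r u v w k m n
      assume uvw: "u \<in> G p" "v \<in> G q" "w \<in> G r"
      define L1 where "L1 = (\<lambda>k m n. \<Sum>i\<le>k. smul ((-1) ^ i * of_nat (k choose i)) (prd (m + k - i) u (prd (n + i) v w)))"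
      define L2 where "L2 = (\<lambda>k m n. \<Sum>i\<le>k. smul ((-1) ^ i * of_nat (k choose i)) (prd (n + k - i) v (prd (m + i) u w)))"
      define R where "R = (\<lambda>k m n. \<Sum>i\<le>m. smul (of_nat (m choose i)) (prd (m + n - i) (prd (k + i) u v) w))"
      define e where "e = eps p q"
      have LHS: "(\<Sum>i\<le>k. smul ((-1) ^ i * of_nat (k choose i))
            (prd (m + k - i) u (prd (n + i) v w)
             - smul (e * (-1) ^ k) (prd (n + k - i) v (prd (m + i) u w))))
          = L1 k m n - smul (e * (-1) ^ k) (L2 k m n)" for k m n
        unfolding L1_def L2_def
        by (simp add: V.scale_right_diff_distrib sum_subtractf V.scale_sum_right V.scale_left_commute mult_ac)
      have L1s: "L1 (Suc k) m n = L1 k (Suc m) n - L1 k m (Suc n)" for k m n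
        unfolding L1_def by (rule V.S_step[where g = "\<lambda>a b. prd a u (prd b v w)"])
      have L2s: "L2 (Suc k) m n = L2 k m (Suc n) - L2 k (Suc m) n" for k m n
        unfolding L2_def by (rule V.S_step[where g = "\<lambda>a b. prd a v (prd b u w)"])
      have Rs: "R (Suc k) m n = R k (Suc m) n - R k m (Suc n)" for k m n
        unfolding R_def by (rule V.T_step[where h = "\<lambda>a b. prd b (prd a u v) w"])
      have J: "L1 k m n - smul (e * (-1) ^ k) (L2 k m n) = R k m n" for k m n
      proof (induction k arbitrary: m n)
        case 0
        show ?case
          using H[unfolded half_commutator_def, rule_format, OF uvw, of m n]
          unfolding L1_def L2_def R_def e_def by simp
      next
        case (Suc k)
        have "L1 (Suc k) m n - smul (e * (-1) ^ Suc k) (L2 (Suc k) m n)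
          = (L1 k (Suc m) n - smul (e * (-1) ^ k) (L2 k (Suc m) n))
            - (L1 k m (Suc n) - smul (e * (-1) ^ k) (L2 k m (Suc n)))"
          unfolding L1s L2s by (simp add: V.scale_right_diff_distrib algebra_simps)
        also have "\<dots> = R (Suc k) m n" using Suc Rs by simp
        finally show ?case .
      qed
      show "(\<Sum>i\<le>k. smul ((-1) ^ i * of_nat (k choose i))
            (prd (m + k - i) u (prd (n + i) v w)
             - smul (eps p q * (-1) ^ k) (prd (n + k - i) v (prd (m + i) u w))))
        = (\<Sum>i\<le>m. smul (of_nat (m choose i)) (prd (m + n - i) (prd (k + i) u v) w))"
        using LHS[of k m n] J[of k m n] unfolding e_def R_def by simp
    qed
  qed
qed

end
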